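(* Let $\mathcal{C}$ be a class of finite graphs. (a) $\mathcal{C}$ is $\mathrm{MSO}_2$-orderable if, and only if, $\mathrm{IS}(\mathcal{C})$ is $\mathrm{MSO}_1$-orderable. (b) $\mathcal{C}$ has property $\mathsf{SEP}$ if, and only if, $\mathrm{IS}(\mathcal{C})$ has property $\mathsf{CUT}$.
   Context: For a graph $G=\langle V,E\rangle$ its incidence split graph $\mathrm{IS}(G)$ has vertex set $V\cup E$ and edges: $\{v,e\}$ whenever $v\in V$ is an end-vertex of $e\in E$, together with $\{x,y\}$ for all distinct $x,y\in V$; $\mathrm{IS}(\mathcal{C})=\{\mathrm{IS}(G):G\in\mathcal{C}\}$. $\lfloor G\rfloor$ is the structure (universe $V$, edge relation) and $\lceil G\rceil$ the structure (universe $V\cup E$, incidence relation $\subseteq V\times E$). An MSO-formula $\varphi(x,y;Z_0,\dots,Z_{n-1})$ defines an order on a class of structures if for every nonempty member $\mathfrak{A}$ there are $P_i\subseteq A$ with $\{(a,b):\mathfrak{A}\models\varphi(a,b;\bar P)\}$ a linear order on $A$; a graph class is $\mathrm{MSO}_1$-orderable (resp. $\mathrm{MSO}_2$-orderable) if some formula defines an order on $\{\lfloor G\rfloor\}$ (resp. $\{\lceil G\rceil\}$). $\mathrm{Sep}(G,k)$ is the maximum over vertex sets $S$, $|S|\le k$, of the number of connected components of $G-S$; $\mathsf{SEP}$ means there is $f$ with $\mathrm{Sep}(G,k)\le f(k)$ for all members and all $k$. A graph with ports in $[k]$ is a graph with $\pi:V\to[k]$; for $R\subseteq[k]\times[k]$,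 $G\otimes_R H$ is the disjoint union plus all edges $\{x,y\}$ with $x,y$ in different operands, labels $a,b$ with $(a,b)\in R$; $\mathrm{Del}$ deletes labels; $\mathrm{Cut}(G,k)$ is the maximal $m$ with $G\cong\mathrm{Del}(H_0\otimes_R\cdots\otimes_R H_{m-1})$ for nonempty $H_i$ with ports in $[k]$ and some $R$; $\mathsf{CUT}$ means there is $f$ with $\mathrm{Cut}(G,k)\le f(k)$ for all members and all $k$. *)

theory Defs
  imports Main
begin

type_synonym 'v graph = "'v set \<times> 'v set set"

definition verts :: "'v graph \<Rightarrow> 'v set" where "verts G = fst G"
definition edges :: "'v graph \<Rightarrow> 'v set set" where "edges G = snd G"

definition finite_graph :: "'v graph \<Rightarrow> bool" where
  "finite_graph G \<longleftrightarrow> finite (verts G) \<and>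
     (\<forall>e\<in>edges G. e \<subseteq> verts G \<and> card e = 2)"

definition graph_iso :: "'v graph \<Rightarrow> 'w graph \<Rightarrow> bool" where
  "graph_iso G H \<longleftrightarrow> (\<exists>f. bij_betw f (verts G) (verts H) \<and>
     (\<forall>x\<in>verts G. \<forall>y\<in>verts G. {x, y} \<in> edges G \<longleftrightarrow> {f x, f y} \<in> edges H))"

definition IS :: "'v graph \<Rightarrow> ('v + 'v set) graph" where
  "IS G = (Inl ` verts G \<union> Inr ` edges G,
           {{Inl v, Inr e} | v e. e \<in> edges G \<and> v \<in> e} \<union>
           {{Inl x, Inl y} | x y. x \<in> verts G \<and> y \<in> verts G \<and> x \<noteq> y})"

text \<open>First-order variables and set variables are both indexed by naturals
(separate name spaces).\<close>

datatype mso =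
    Eq nat nat
  | Rel nat nat
  | Mem nat nat
  | Neg mso
  | Conj mso mso
  | Ex1 nat mso
  | ExS nat mso

type_synonym 'a rstruct = "'a set \<times> ('a \<Rightarrow> 'a \<Rightarrow> bool)"

fun sat :: "'a rstruct \<Rightarrow> (nat \<Rightarrow> 'a) \<Rightarrow> (nat \<Rightarrow> 'a set) \<Rightarrow> mso \<Rightarrow> bool" where
  "sat S v W (Eq i j) = (v i = v j)"
| "sat S v W (Rel i j) = snd S (v i) (v j)"
| "sat S v W (Mem i j) = (v i \<in> W j)"
| "sat S v W (Neg \<phi>) = (\<not> sat S v W \<phi>)"
| "sat S v W (Conj \<phi> \<psi>) = (sat S v W \<phi> \<and> sat S v W \<psi>)"
| "sat S v W (Ex1 i \<phi>) = (\<exists>a\<in>fst S. sat S (v(i := a)) W \<phi>)"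
| "sat S v W (ExS i \<phi>) = (\<exists>X. X \<subseteq> fst S \<and> sat S v (W(i := X)) \<phi>)"

fun fv1 :: "mso \<Rightarrow> nat set" where
  "fv1 (Eq i j) = {i, j}"
| "fv1 (Rel i j) = {i, j}"
| "fv1 (Mem i j) = {i}"
| "fv1 (Neg \<phi>) = fv1 \<phi>"
| "fv1 (Conj \<phi> \<psi>) = fv1 \<phi> \<union> fv1 \<psi>"
| "fv1 (Ex1 i \<phi>) = fv1 \<phi> - {i}"
| "fv1 (ExS i \<phi>) = fv1 \<phi>"

fun fv2 :: "mso \<Rightarrow> nat set" where
  "fv2 (Eq i j) = {}"
| "fv2 (Rel i j) = {}"
| "fv2 (Mem i j) = {j}"
| "fv2 (Neg \<phi>) = fv2 \<phi>"
| "fv2 (Conj \<phi> \<psi>) = fv2 \<phi> \<union> fv2 \<psi>"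
| "fv2 (Ex1 i \<phi>) = fv2 \<phi>"
| "fv2 (ExS i \<phi>) = fv2 \<phi> - {i}"

text \<open>phi(x, y; Z_0, ..., Z_(n-1)): first-order variable 0 is x, 1 is y, and the
free set variables are among 0..n-1.  Relation defined in structure S with
parameters P.\<close>

definition defined_rel :: "mso \<Rightarrow> 'a rstruct \<Rightarrow> (nat \<Rightarrow> 'a set) \<Rightarrow> ('a \<times> 'a) set" where
  "defined_rel \<phi> S P = {(a, b). a \<in> fst S \<and> b \<in> fst S \<and>
       sat S (\<lambda>i. if i = 0 then a else b) P \<phi>}"

definition defines_order :: "mso \<Rightarrow> nat \<Rightarrow> 'a rstruct set \<Rightarrow> bool" where
  "defines_order \<phi> n K \<longleftrightarrow> fv1 \<phi> \<subseteq> {0, 1} \<and> fv2 \<phi> \<subseteq> {..<n} \<and>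
     (\<forall>S\<in>K. fst S \<noteq> {} \<longrightarrow>
        (\<exists>P. (\<forall>i<n. P i \<subseteq> fst S) \<and> linear_order_on (fst S) (defined_rel \<phi> S P)))"

definition lower :: "'v graph \<Rightarrow> 'v rstruct" where
  "lower G = (verts G, \<lambda>x y. {x, y} \<in> edges G)"

definition upper :: "'v graph \<Rightarrow> ('v + 'v set) rstruct" where
  "upper G = (Inl ` verts G \<union> Inr ` edges G,
              \<lambda>x y. \<exists>v e. x = Inl v \<and> y = Inr e \<and> e \<in> edges G \<and> v \<in> e)"

definition MSO1_orderable :: "'v graph set \<Rightarrow> bool" where
  "MSO1_orderable C \<longleftrightarrow> (\<exists>\<phi> n. defines_order \<phi> n (lower ` C))"

definition MSO2_orderable :: "'v graph set \<Rightarrow> bool" where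
  "MSO2_orderable C \<longleftrightarrow> (\<exists>\<phi> n. defines_order \<phi> n (upper ` C))"

definition del_verts :: "'v graph \<Rightarrow> 'v set \<Rightarrow> 'v graph" where
  "del_verts G S = (verts G - S, {e \<in> edges G. e \<inter> S = {}})"

definition adj :: "'v graph \<Rightarrow> 'v \<Rightarrow> 'v \<Rightarrow> bool" where
  "adj G x y \<longleftrightarrow> {x, y} \<in> edges G"

definition components :: "'v graph \<Rightarrow> 'v set set" where
  "components G = {{y \<in> verts G. (adj G)\<^sup>*\<^sup>* x y} | x. x \<in> verts G}"

definition num_components :: "'v graph \<Rightarrow> nat" where
  "num_components G = card (components G)"

definition Sep :: "'v graph \<Rightarrow> nat \<Rightarrow> nat" where
  "Sep G k = Max {num_components (del_verts G S) | S. S \<subseteq> verts G \<and> card S \<le> k}"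

definition SEP :: "'v graph set \<Rightarrow> bool" where
  "SEP C \<longleftrightarrow> (\<exists>f :: nat \<Rightarrow> nat. \<forall>G\<in>C. \<forall>k. Sep G k \<le> f k)"

text \<open>Cut(G,k) is the maximal such m; Sup on nat (= Max for the finite nonempty
case, 0 if no decomposition exists, e.g. k = 0 and G nonempty).\<close>

text \<open>A graph with ports in [k] = {1..k}: a graph together with a labelling.\<close>
type_synonym 'w pgraph = "'w graph \<times> ('w \<Rightarrow> nat)"

definition has_ports :: "nat \<Rightarrow> 'w pgraph \<Rightarrow> bool" where
  "has_ports k H \<longleftrightarrow> finite_graph (fst H) \<and> snd H ` verts (fst H) \<subseteq> {1..k}"

text \<open>H_0 (x)_R ... (x)_R H_(m-1): disjoint union (vertices tagged by the operand
index) plus all edges between vertices of different operands whose labels (a, b)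
satisfy (a, b) \<in> R.\<close>
definition join :: "(nat \<times> nat) set \<Rightarrow> (nat \<Rightarrow> 'w pgraph) \<Rightarrow> nat \<Rightarrow> (nat \<times> 'w) pgraph" where
  "join R H m =
     (({(i, x). i < m \<and> x \<in> verts (fst (H i))},
       {{(i, x), (i, y)} | i x y. i < m \<and> {x, y} \<in> edges (fst (H i))} \<union>
       {{(i, x), (j, y)} | i j x y. i < m \<and> j < m \<and> i \<noteq> j \<and>
           x \<in> verts (fst (H i)) \<and> y \<in> verts (fst (H j)) \<and>
           (snd (H i) x, snd (H j) y) \<in> R}),
      \<lambda>(i, x). snd (H i) x)"

definition Del :: "'w pgraph \<Rightarrow> 'w graph" where
  "Del H = fst H"

definition Cut :: "'v graph \<Rightarrow> nat \<Rightarrow> nat" where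
  "Cut G k = Sup {m. \<exists>(R :: (nat \<times> nat) set) (H :: nat \<Rightarrow> 'v pgraph).
       R \<subseteq> {1..k} \<times> {1..k} \<and>
       (\<forall>i<m. has_ports k (H i) \<and> verts (fst (H i)) \<noteq> {}) \<and>
       graph_iso G (Del (join R H m))}"

definition CUT :: "'v graph set \<Rightarrow> bool" where
  "CUT C \<longleftrightarrow> (\<exists>f :: nat \<Rightarrow> nat. \<forall>G\<in>C. \<forall>k. Cut G k \<le> f k)"

end

theory Submission
  imports Defs
begin



fun tr :: "(nat \<Rightarrow> nat \<Rightarrow> mso) \<Rightarrow> mso \<Rightarrow> mso" where
  "tr f (Eq i j) = Eq i j"
| "tr f (Rel i j) = f i j"
| "tr f (Mem i j) = Mem i j"
| "tr f (Neg \<phi>) = Neg (tr f \<phi>)"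
| "tr f (Conj \<phi> \<psi>) = Conj (tr f \<phi>) (tr f \<psi>)"
| "tr f (Ex1 i \<phi>) = Ex1 i (tr f \<phi>)"
| "tr f (ExS i \<phi>) = ExS i (tr f \<phi>)"

fun sv :: "mso \<Rightarrow> nat" where
  "sv (Eq i j) = 0"
| "sv (Rel i j) = 0"
| "sv (Mem i j) = Suc j"
| "sv (Neg \<phi>) = sv \<phi>"
| "sv (Conj \<phi> \<psi>) = max (sv \<phi>) (sv \<psi>)"
| "sv (Ex1 i \<phi>) = sv \<phi>"
| "sv (ExS i \<phi>) = max (Suc i) (sv \<phi>)"

lemma tr_sat:
  assumes U: "fst S1 = fst S2"
    and F: "\<And>i j v W. W N = V \<Longrightarrow> sat S2 v W (f i j) = snd S1 (v i) (v j)"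
  shows "sv \<phi> \<le> N \<Longrightarrow> W N = V \<Longrightarrow> sat S2 v W (tr f \<phi>) = sat S1 v W \<phi>"
proof (induction \<phi> arbitrary: v W)
  case (ExS i \<phi>)
  then show ?case using U by (auto simp: max_def split: if_splits)
qed (auto simp: F U)

lemma sat_fv2:
  "\<forall>i\<in>fv2 \<phi>. W i = W' i \<Longrightarrow> sat S v W \<phi> = sat S v W' \<phi>"
proof (induction \<phi> arbitrary: v W W')
  case (ExS i \<phi>)
  have "\<And>X. sat S v (W(i := X)) \<phi> = sat S v (W'(i := X)) \<phi>"
    using ExS by (intro ExS.IH) auto
  then show ?case by simp
next
  case (Conj \<phi>1 \<phi>2)
  then show ?case by (metis UnI1 UnI2 fv2.simps(5) sat.simps(5))
qed auto

lemma fv1_tr: "(\<And>i j. fv1 (f i j) \<subseteq> {i, j}) \<Longrightarrow> fv1 (tr f \<phi>) \<subseteq> fv1 \<phi>"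
  by (induction \<phi>) auto

lemma fv2_tr: "(\<And>i j. fv2 (f i j) \<subseteq> {N}) \<Longrightarrow> fv2 (tr f \<phi>) \<subseteq> fv2 \<phi> \<union> {N}"
  by (induction \<phi>) auto

lemma IS_univ: "fst (lower (IS G)) = fst (upper G)"
  by (simp add: lower_def upper_def IS_def verts_def)

lemma IS_edge_up:
  assumes "finite_graph G"
  shows "({x, y} \<in> edges (IS G)) =
    (snd (upper G) x y \<or> snd (upper G) y x \<or> (x \<noteq> y \<and> x \<in> Inl ` verts G \<and> y \<in> Inl ` verts G))"
  using assms unfolding IS_def upper_def edges_def verts_def finite_graph_def
  by (auto simp: doubleton_eq_iff)

lemma IS_edge_low:
  assumes "finite_graph G"
  shows "snd (upper G) x y = ({x, y} \<in> edges (IS G) \<and> x \<in> Inl ` verts G \<and> y \<notin> Inl ` verts G)"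
  using assms unfolding IS_def upper_def edges_def verts_def finite_graph_def
  by (auto simp: doubleton_eq_iff)

lemma defined_rel_cong:
  assumes "fst S1 = fst S2"
    and "\<And>a b. a \<in> fst S1 \<Longrightarrow> b \<in> fst S1 \<Longrightarrow>
           sat S1 (\<lambda>i. if i = 0 then a else b) P1 \<phi>1 = sat S2 (\<lambda>i. if i = 0 then a else b) P2 \<phi>2"
  shows "defined_rel \<phi>1 S1 P1 = defined_rel \<phi>2 S2 P2"
  using assms unfolding defined_rel_def by auto

lemma transfer_order:
  fixes S1 :: "'a rstruct" and S2 :: "'a rstruct"
  assumes U: "fst S1 = fst S2"
    and F: "\<And>i j v W. W N = V \<Longrightarrow> sat S2 v W (f i j) = snd S1 (v i) (v j)"
    and N: "sv \<phi> \<le> N" "n \<le> N" and fv2: "fv2 \<phi> \<subseteq> {..<n}"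
    and P: "\<forall>i<n. P i \<subseteq> fst S1" and V: "V \<subseteq> fst S1"
    and lin: "linear_order_on (fst S1) (defined_rel \<phi> S1 P)"
  shows "\<exists>P'. (\<forall>i<Suc N. P' i \<subseteq> fst S2) \<and> linear_order_on (fst S2) (defined_rel (tr f \<phi>) S2 P')"
proof -
  define P' where "P' i = (if i = N then V else if i < n then P i else {})" for i
  have PN: "P' N = V" by (simp add: P'_def)
  have "defined_rel (tr f \<phi>) S2 P' = defined_rel \<phi> S1 P"
  proof (rule defined_rel_cong)
    fix a b
    have "sat S2 (\<lambda>i. if i = 0 then a else b) P' (tr f \<phi>) = sat S1 (\<lambda>i. if i = 0 then a else b) P' \<phi>"
      using tr_sat[of S1 S2 N V f \<phi> P', OF U F N(1) PN] .
    also have "\<dots> = sat S1 (\<lambda>i. if i = 0 then a else b) P \<phi>"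
      by (rule sat_fv2) (use fv2 N(2) in \<open>auto simp: P'_def\<close>)
    finally show "sat S2 (\<lambda>i. if i = 0 then a else b) P' (tr f \<phi>) = sat S1 (\<lambda>i. if i = 0 then a else b) P \<phi>" .
  qed (use U in auto)
  moreover have "\<forall>i<Suc N. P' i \<subseteq> fst S2" using P V U by (auto simp: P'_def)
  ultimately show ?thesis using lin U by metis
qed

definition fA :: "nat \<Rightarrow> nat \<Rightarrow> nat \<Rightarrow> mso" where
  "fA N i j = Neg (Conj (Neg (Rel i j)) (Conj (Neg (Rel j i))
      (Neg (Conj (Neg (Eq i j)) (Conj (Mem i N) (Mem j N))))))"

definition fB :: "nat \<Rightarrow> nat \<Rightarrow> nat \<Rightarrow> mso" where
  "fB N i j = Conj (Rel i j) (Conj (Mem i N) (Neg (Mem j N)))"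

lemma partA:
  fixes C :: "'v graph set"
  assumes fg: "\<forall>G\<in>C. finite_graph G"
  shows "MSO2_orderable C \<longleftrightarrow> MSO1_orderable (IS ` C)"
proof
  assume "MSO2_orderable C"
  then obtain \<phi> n where d: "defines_order \<phi> n (upper ` C)" unfolding MSO2_orderable_def by blast
  define N where "N = max n (sv \<phi>)"
  have "defines_order (tr (fB N) \<phi>) (Suc N) (lower ` IS ` C)"
    unfolding defines_order_def
  proof (intro conjI ballI impI)
    show "fv1 (tr (fB N) \<phi>) \<subseteq> {0, 1}"
      using fv1_tr[of "fB N" \<phi>] d unfolding defines_order_def fB_def by auto
    show "fv2 (tr (fB N) \<phi>) \<subseteq> {..<Suc N}"
      using fv2_tr[of "fB N" N \<phi>] d unfolding defines_order_def fB_def N_def by auto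
    fix S assume S: "S \<in> lower ` IS ` C" and ne: "fst S \<noteq> {}"
    from S obtain G where G: "G \<in> C" "S = lower (IS G)" by blast
    have ne': "fst (upper G) \<noteq> {}" using ne G IS_univ by metis
    obtain P where P: "\<forall>i<n. P i \<subseteq> fst (upper G)" "linear_order_on (fst (upper G)) (defined_rel \<phi> (upper G) P)"
      using d G(1) ne' unfolding defines_order_def by blast
    show "\<exists>P. (\<forall>i<Suc N. P i \<subseteq> fst S) \<and> linear_order_on (fst S) (defined_rel (tr (fB N) \<phi>) S P)"
      unfolding G(2)
    proof (rule transfer_order[OF IS_univ[symmetric] _ _ _ _ P(1) _ P(2)])
      fix i j v and W :: "nat \<Rightarrow> ('v + 'v set) set" assume "W N = Inl ` verts G"
      then show "sat (lower (IS G)) v W (fB N i j) = snd (upper G) (v i) (v j)"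
        using IS_edge_low[of G "v i" "v j"] fg G(1) by (auto simp: fB_def lower_def)
    qed (use d in \<open>auto simp: N_def defines_order_def upper_def\<close>)
  qed
  then show "MSO1_orderable (IS ` C)" unfolding MSO1_orderable_def by blast
next
  assume "MSO1_orderable (IS ` C)"
  then obtain \<phi> n where d: "defines_order \<phi> n (lower ` IS ` C)" unfolding MSO1_orderable_def by blast
  define N where "N = max n (sv \<phi>)"
  have "defines_order (tr (fA N) \<phi>) (Suc N) (upper ` C)"
    unfolding defines_order_def
  proof (intro conjI ballI impI)
    show "fv1 (tr (fA N) \<phi>) \<subseteq> {0, 1}"
      using fv1_tr[of "fA N" \<phi>] d unfolding defines_order_def fA_def by auto
    show "fv2 (tr (fA N) \<phi>) \<subseteq> {..<Suc N}"
      using fv2_tr[of "fA N" N \<phi>] d unfolding defines_order_def fA_def N_def by auto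
    fix S assume "S \<in> upper ` C" and ne: "fst S \<noteq> {}"
    then obtain G where G: "G \<in> C" "S = upper G" by auto
    have ne': "fst (lower (IS G)) \<noteq> {}" using ne G IS_univ by metis
    obtain P where P: "\<forall>i<n. P i \<subseteq> fst (lower (IS G))" "linear_order_on (fst (lower (IS G))) (defined_rel \<phi> (lower (IS G)) P)"
      using d G(1) ne' unfolding defines_order_def by blast
    show "\<exists>P. (\<forall>i<Suc N. P i \<subseteq> fst S) \<and> linear_order_on (fst S) (defined_rel (tr (fA N) \<phi>) S P)"
      unfolding G(2)
    proof (rule transfer_order[OF IS_univ _ _ _ _ P(1) _ P(2)])
      fix i j v and W :: "nat \<Rightarrow> ('v + 'v set) set" assume "W N = Inl ` verts G"
      then show "sat (upper G) v W (fA N i j) = snd (lower (IS G)) (v i) (v j)"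
        using IS_edge_up[of G "v i" "v j"] fg G(1) by (auto simp: fA_def lower_def)
    qed (use d in \<open>auto simp: N_def defines_order_def lower_def IS_def verts_def\<close>)
  qed
  then show "MSO2_orderable C" unfolding MSO2_orderable_def by blast
qed



definition cutdec :: "'w graph \<Rightarrow> nat \<Rightarrow> (nat \<times> nat) set \<Rightarrow> nat \<Rightarrow> ('w \<Rightarrow> nat) \<Rightarrow> ('w \<Rightarrow> nat) \<Rightarrow> bool" where
  "cutdec \<Gamma> k R m p lab \<longleftrightarrow> R \<subseteq> {1..k} \<times> {1..k} \<and> (\<forall>z\<in>verts \<Gamma>. p z < m) \<and>
     (\<forall>i<m. \<exists>z\<in>verts \<Gamma>. p z = i) \<and> (\<forall>z\<in>verts \<Gamma>. lab z \<in> {1..k}) \<and>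
     (\<forall>z\<in>verts \<Gamma>. \<forall>w\<in>verts \<Gamma>. p z \<noteq> p w \<longrightarrow>
        ({z, w} \<in> edges \<Gamma> \<longleftrightarrow> (lab z, lab w) \<in> R \<or> (lab w, lab z) \<in> R))"

lemma cutdec_cross:
  assumes "cutdec \<Gamma> k R m p lab" "z \<in> verts \<Gamma>" "w \<in> verts \<Gamma>" "p z \<noteq> p w"
  shows "{z, w} \<in> edges \<Gamma> \<longleftrightarrow> (lab z, lab w) \<in> R \<or> (lab w, lab z) \<in> R"
proof -
  have "\<forall>z\<in>verts \<Gamma>. \<forall>w\<in>verts \<Gamma>. p z \<noteq> p w \<longrightarrow>
        ({z, w} \<in> edges \<Gamma> \<longleftrightarrow> (lab z, lab w) \<in> R \<or> (lab w, lab z) \<in> R)"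
    using assms(1) unfolding cutdec_def by (elim conjE)
  then show ?thesis using assms(2-4) by simp
qed

lemma join_verts: "verts (Del (join R H m)) = {(i, x). i < m \<and> x \<in> verts (fst (H i))}"
  by (simp add: Del_def join_def verts_def)

lemma join_edge:
  assumes "i < m" "j < m" "x \<in> verts (fst (H i))" "y \<in> verts (fst (H j))"
  shows "{(i, x), (j, y)} \<in> edges (Del (join R H m)) \<longleftrightarrow>
    (i = j \<and> {x, y} \<in> edges (fst (H i))) \<or>
    (i \<noteq> j \<and> ((snd (H i) x, snd (H j) y) \<in> R \<or> (snd (H j) y, snd (H i) x) \<in> R))"
proof -
  have E: "edges (Del (join R H m)) =
       {{(i, x), (i, y)} | i x y. i < m \<and> {x, y} \<in> edges (fst (H i))} \<union>
       {{(i, x), (j, y)} | i j x y. i < m \<and> j < m \<and> i \<noteq> j \<and>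
           x \<in> verts (fst (H i)) \<and> y \<in> verts (fst (H j)) \<and>
           (snd (H i) x, snd (H j) y) \<in> R}"
    by (simp add: Del_def join_def edges_def verts_def)
  define A where "A = {{(i, x), (i, y)} | i x y. i < m \<and> {x, y} \<in> edges (fst (H i))}"
  define B where "B = {{(i, x), (j, y)} | i j x y. i < m \<and> j < m \<and> i \<noteq> j \<and>
           x \<in> verts (fst (H i)) \<and> y \<in> verts (fst (H j)) \<and>
           (snd (H i) x, snd (H j) y) \<in> R}"
  show ?thesis unfolding E A_def[symmetric] B_def[symmetric]
  proof (intro iffI)
    assume "{(i, x), (j, y)} \<in> A \<union> B"
    then show "(i = j \<and> {x, y} \<in> edges (fst (H i))) \<or> (i \<noteq> j \<and> ((snd (H i) x, snd (H j) y) \<in> R \<or> (snd (H j) y, snd (H i) x) \<in> R))" unfolding A_def B_def by (auto simp: doubleton_eq_iff insert_commute)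
  next
    assume "(i = j \<and> {x, y} \<in> edges (fst (H i))) \<or> (i \<noteq> j \<and> ((snd (H i) x, snd (H j) y) \<in> R \<or> (snd (H j) y, snd (H i) x) \<in> R))"
    then show "{(i, x), (j, y)} \<in> A \<union> B"
    proof (elim disjE conjE)
      assume "i = j" "{x, y} \<in> edges (fst (H i))"
      then show ?thesis using assms unfolding A_def B_def by blast
    next
      assume "i \<noteq> j" "(snd (H i) x, snd (H j) y) \<in> R"
      then show ?thesis using assms unfolding A_def B_def by blast
    next
      assume "i \<noteq> j" "(snd (H j) y, snd (H i) x) \<in> R"
      then have "{(j, y), (i, x)} \<in> B" using assms unfolding A_def B_def by blast
      then show ?thesis by (simp add: insert_commute)
    qed
  qed
qed




lemma cut_extract:
  assumes R: "R \<subseteq> {1..k} \<times> {1..k}"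
    and H: "\<forall>i<m. has_ports k (H i) \<and> verts (fst (H i)) \<noteq> {}"
    and iso: "graph_iso \<Gamma> (Del (join R H m))"
  shows "\<exists>p lab. cutdec \<Gamma> k R m p lab"
proof -
  obtain f where f: "bij_betw f (verts \<Gamma>) (verts (Del (join R H m)))"
    and fe: "\<forall>x\<in>verts \<Gamma>. \<forall>y\<in>verts \<Gamma>. {x, y} \<in> edges \<Gamma> \<longleftrightarrow> {f x, f y} \<in> edges (Del (join R H m))"
    using iso unfolding graph_iso_def by blast
  define p where "p z = fst (f z)" for z
  define lab where "lab z = snd (H (p z)) (snd (f z))" for z
  have fz: "z \<in> verts \<Gamma> \<Longrightarrow> p z < m \<and> snd (f z) \<in> verts (fst (H (p z)))" for z
    using bij_betwE[OF f] unfolding join_verts p_def by auto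
  have feq: "f z = (p z, snd (f z))" for z by (simp add: p_def)
  have "cutdec \<Gamma> k R m p lab"
    unfolding cutdec_def
  proof (intro conjI ballI allI impI)
    show "R \<subseteq> {1..k} \<times> {1..k}" by (rule R)
    fix z assume "z \<in> verts \<Gamma>" then show "p z < m" using fz by blast
  next
    fix i assume i: "i < m"
    then obtain x where x: "x \<in> verts (fst (H i))" using H by blast
    then have "(i, x) \<in> verts (Del (join R H m))" using i by (simp add: join_verts)
    then obtain z where "z \<in> verts \<Gamma>" "f z = (i, x)" using f by (metis bij_betw_iff_bijections)
    then show "\<exists>z\<in>verts \<Gamma>. p z = i" unfolding p_def by (metis fst_conv)
  next
    fix z assume z: "z \<in> verts \<Gamma>"
    then show "lab z \<in> {1..k}" using fz[OF z] H unfolding has_ports_def lab_def by blast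
  next
    fix z w assume z: "z \<in> verts \<Gamma>" and w: "w \<in> verts \<Gamma>" and ne: "p z \<noteq> p w"
    have "{z, w} \<in> edges \<Gamma> \<longleftrightarrow> {(p z, snd (f z)), (p w, snd (f w))} \<in> edges (Del (join R H m))"
      using fe z w feq by metis
    also have "\<dots> \<longleftrightarrow> (lab z, lab w) \<in> R \<or> (lab w, lab z) \<in> R"
      using join_edge[of "p z" m "p w" "snd (f z)" H "snd (f w)" R] fz[OF z] fz[OF w] ne
      by (simp add: lab_def)
    finally show "{z, w} \<in> edges \<Gamma> \<longleftrightarrow> (lab z, lab w) \<in> R \<or> (lab w, lab z) \<in> R" .
  qed
  then show ?thesis by blast
qed




lemma cut_build:
  fixes \<Gamma> :: "'w graph"
  assumes fg: "finite_graph \<Gamma>" and d: "cutdec \<Gamma> k R m p lab"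
  shows "\<exists>H :: nat \<Rightarrow> 'w pgraph. (\<forall>i<m. has_ports k (H i) \<and> verts (fst (H i)) \<noteq> {}) \<and> graph_iso \<Gamma> (Del (join R H m))"
proof -
  define H where "H i = (({z \<in> verts \<Gamma>. p z = i}, {e \<in> edges \<Gamma>. e \<subseteq> {z \<in> verts \<Gamma>. p z = i}}), lab)" for i
  have vH: "verts (fst (H i)) = {z \<in> verts \<Gamma>. p z = i}" for i by (simp add: H_def verts_def)
  have eH: "edges (fst (H i)) = {e \<in> edges \<Gamma>. e \<subseteq> {z \<in> verts \<Gamma>. p z = i}}" for i by (simp add: H_def edges_def)
  have sH: "snd (H i) = lab" for i by (simp add: H_def)
  have ports: "\<forall>i<m. has_ports k (H i) \<and> verts (fst (H i)) \<noteq> {}"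
    using d fg unfolding has_ports_def finite_graph_def cutdec_def vH eH sH by auto
  define f where "f z = (p z, z)" for z
  have bij: "bij_betw f (verts \<Gamma>) (verts (Del (join R H m)))"
    unfolding join_verts vH bij_betw_def inj_on_def f_def
    using d unfolding cutdec_def by auto
  have "\<forall>x\<in>verts \<Gamma>. \<forall>y\<in>verts \<Gamma>. {x, y} \<in> edges \<Gamma> \<longleftrightarrow> {f x, f y} \<in> edges (Del (join R H m))"
  proof (intro ballI)
    fix x y assume x: "x \<in> verts \<Gamma>" and y: "y \<in> verts \<Gamma>"
    have px: "p x < m" "p y < m" using d x y unfolding cutdec_def by auto
    have "{f x, f y} \<in> edges (Del (join R H m)) \<longleftrightarrow>
      (p x = p y \<and> {x, y} \<in> edges (fst (H (p x)))) \<or>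
      (p x \<noteq> p y \<and> ((lab x, lab y) \<in> R \<or> (lab y, lab x) \<in> R))"
      unfolding f_def using join_edge[of "p x" m "p y" x H y R] px x y by (simp add: vH sH)
    also have "\<dots> \<longleftrightarrow> {x, y} \<in> edges \<Gamma>"
    proof (cases "p x = p y")
      case True
      then show ?thesis using x y by (auto simp: eH)
    next
      case False
      have "{x, y} \<in> edges \<Gamma> \<longleftrightarrow> (lab x, lab y) \<in> R \<or> (lab y, lab x) \<in> R"
        by (rule cutdec_cross[OF d x y False])
      then show ?thesis using False by simp
    qed
    finally show "{x, y} \<in> edges \<Gamma> \<longleftrightarrow> {f x, f y} \<in> edges (Del (join R H m))" by simp
  qed
  then have "graph_iso \<Gamma> (Del (join R H m))" using bij unfolding graph_iso_def by blast
  with ports show ?thesis by (intro exI conjI) assumption+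
qed




lemma cutdec_le_card:
  assumes "finite_graph \<Gamma>" "cutdec \<Gamma> k R m p lab"
  shows "m \<le> card (verts \<Gamma>)"
proof -
  have "{..<m} \<subseteq> p ` verts \<Gamma>" using assms(2) unfolding cutdec_def by force
  then have "card {..<m} \<le> card (p ` verts \<Gamma>)"
    using assms(1) by (intro card_mono) (auto simp: finite_graph_def)
  also have "\<dots> \<le> card (verts \<Gamma>)" using assms(1) card_image_le finite_graph_def by blast
  finally show ?thesis by simp
qed

lemma Cut_le:
  fixes \<Gamma> :: "'a graph"
  assumes "finite_graph \<Gamma>"
    and "\<And>R m p lab. cutdec \<Gamma> k R m p lab \<Longrightarrow> m \<le> B"
  shows "Cut \<Gamma> k \<le> B"
proof -
  let ?M = "{m. \<exists>(R :: (nat \<times> nat) set) (H :: nat \<Rightarrow> 'a pgraph).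
       R \<subseteq> {1..k} \<times> {1..k} \<and>
       (\<forall>i<m. has_ports k (H i) \<and> verts (fst (H i)) \<noteq> {}) \<and>
       graph_iso \<Gamma> (Del (join R H m))}"
  have le: "m \<le> B" if "m \<in> ?M" for m
  proof -
    from that obtain R and H :: "nat \<Rightarrow> 'a pgraph" where "R \<subseteq> {1..k} \<times> {1..k}"
       "\<forall>i<m. has_ports k (H i) \<and> verts (fst (H i)) \<noteq> {}" "graph_iso \<Gamma> (Del (join R H m))"
      unfolding mem_Collect_eq by (elim exE conjE)
    from cut_extract[OF this] obtain p lab where "cutdec \<Gamma> k R m p lab" by blast
    then show ?thesis by (rule assms(2))
  qed
  have "Sup ?M \<le> B"
  proof (cases "?M = {}")
    case True then show ?thesis by (subst True) simp
  next
    case False then show ?thesis using le by (intro cSup_least) auto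
  qed
  then show ?thesis unfolding Cut_def .
qed

lemma Cut_ge:
  fixes \<Gamma> :: "'a graph"
  assumes "finite_graph \<Gamma>" "cutdec \<Gamma> k R m p lab"
  shows "m \<le> Cut \<Gamma> k"
proof -
  let ?M = "{m. \<exists>(R :: (nat \<times> nat) set) (H :: nat \<Rightarrow> 'a pgraph).
       R \<subseteq> {1..k} \<times> {1..k} \<and>
       (\<forall>i<m. has_ports k (H i) \<and> verts (fst (H i)) \<noteq> {}) \<and>
       graph_iso \<Gamma> (Del (join R H m))}"
  obtain H :: "nat \<Rightarrow> 'a pgraph" where "\<forall>i<m. has_ports k (H i) \<and> verts (fst (H i)) \<noteq> {}" "graph_iso \<Gamma> (Del (join R H m))"
    using cut_build[OF assms] by (elim exE conjE)
  moreover have "R \<subseteq> {1..k} \<times> {1..k}" using assms(2) unfolding cutdec_def by blast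
  ultimately have "m \<in> ?M" unfolding mem_Collect_eq by (intro exI conjI) assumption+
  moreover have "bdd_above ?M"
  proof (rule bdd_aboveI[of _ "card (verts \<Gamma>)"])
    fix m' assume "m' \<in> ?M"
    then obtain R' and H' :: "nat \<Rightarrow> 'a pgraph" where "R' \<subseteq> {1..k} \<times> {1..k}"
       "\<forall>i<m'. has_ports k (H' i) \<and> verts (fst (H' i)) \<noteq> {}" "graph_iso \<Gamma> (Del (join R' H' m'))"
      unfolding mem_Collect_eq by (elim exE conjE)
    from cut_extract[OF this] obtain p' lab' where "cutdec \<Gamma> k R' m' p' lab'" by blast
    then show "m' \<le> card (verts \<Gamma>)" by (rule cutdec_le_card[OF assms(1)])
  qed
  ultimately have "m \<le> Sup ?M" by (rule cSup_upper)
  then show ?thesis unfolding Cut_def .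
qed





lemma IS_verts: "verts (IS G) = Inl ` verts G \<union> Inr ` edges G"
  by (simp add: IS_def verts_def)

lemma IS_edges: "edges (IS G) = {{Inl v, Inr e} | v e. e \<in> edges G \<and> v \<in> e} \<union>
           {{Inl x, Inl y} | x y. x \<in> verts G \<and> y \<in> verts G \<and> x \<noteq> y}"
  by (simp add: IS_def edges_def)

lemma IS_LL: "{Inl a, Inl b} \<in> edges (IS G) \<longleftrightarrow> a \<in> verts G \<and> b \<in> verts G \<and> a \<noteq> b"
  unfolding IS_edges by (auto simp: doubleton_eq_iff)

lemma IS_LR: "{Inl a, Inr e} \<in> edges (IS G) \<longleftrightarrow> e \<in> edges G \<and> a \<in> e"
  unfolding IS_edges by (auto simp: doubleton_eq_iff)

lemma IS_RL: "{Inr e, Inl a} \<in> edges (IS G) \<longleftrightarrow> e \<in> edges G \<and> a \<in> e"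
  using IS_LR by (metis insert_commute)

lemma IS_RR: "{Inr e, Inr e'} \<notin> edges (IS G)"
  unfolding IS_edges by (auto simp: doubleton_eq_iff)

lemma IS_finite_graph:
  assumes "finite_graph G" shows "finite_graph (IS G)"
proof -
  have fE: "finite (edges G)"
  proof -
    have "edges G \<subseteq> Pow (verts G)" using assms unfolding finite_graph_def by auto
    then show ?thesis using assms unfolding finite_graph_def by (meson finite_Pow_iff finite_subset)
  qed
  show ?thesis using assms fE unfolding finite_graph_def IS_verts IS_edges
    by (auto simp: card_insert_if)
qed

lemma edge_two:
  assumes "finite_graph G" "e \<in> edges G"
  obtains a b where "e = {a, b}" "a \<noteq> b" "a \<in> verts G" "b \<in> verts G"
  using assms unfolding finite_graph_def by (metis card_2_iff insert_subset)

lemma finite_edges: "finite_graph G \<Longrightarrow> finite (edges G)"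
  using IS_finite_graph[of G] unfolding finite_graph_def IS_verts by (auto dest: finite_imageD)




lemma Sep_ge:
  assumes "finite_graph G" "S \<subseteq> verts G" "card S \<le> k"
  shows "num_components (del_verts G S) \<le> Sep G k"
proof -
  let ?A = "{num_components (del_verts G S) | S. S \<subseteq> verts G \<and> card S \<le> k}"
  have "?A \<subseteq> (\<lambda>S. num_components (del_verts G S)) ` Pow (verts G)" by auto
  then have "finite ?A" using assms(1) unfolding finite_graph_def by (meson finite_Pow_iff finite_imageI finite_subset)
  then show ?thesis unfolding Sep_def using assms(2,3) by (intro Max_ge) auto
qed

lemma upper_bound:
  fixes G :: "'v graph"
  assumes fg: "finite_graph G" and d: "cutdec (IS G) k R m p lab"
  shows "m \<le> 5 * k + Sep G (4 * k)"
proof -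
  define V where "V = verts G"
  define E where "E = edges G"
  define Q where "Q a b \<longleftrightarrow> (a, b) \<in> R \<or> (b, a) \<in> R" for a b
  have nodes: "verts (IS G) = Inl ` V \<union> Inr ` E" by (simp add: IS_verts V_def E_def)
  have cross: "{z, w} \<in> edges (IS G) \<longleftrightarrow> Q (lab z) (lab w)"
    if "z \<in> verts (IS G)" "w \<in> verts (IS G)" "p z \<noteq> p w" for z w
    using cutdec_cross[OF d that] by (simp add: Q_def)
  have Qs: "Q a b = Q b a" for a b by (auto simp: Q_def)
  have pm: "p z < m" if "z \<in> verts (IS G)" for z using d that unfolding cutdec_def by blast
  have psurj: "\<exists>z\<in>verts (IS G). p z = i" if "i < m" for i using d that unfolding cutdec_def by blast
  have labk: "lab z \<in> {1..k}" if "z \<in> verts (IS G)" for z using d that unfolding cutdec_def by blast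
  have eV: "e \<subseteq> V" if "e \<in> E" for e using fg that unfolding finite_graph_def V_def E_def by blast
  have ecard: "card e = 2" if "e \<in> E" for e using fg that unfolding finite_graph_def E_def by blast
  have efin: "finite e" if "e \<in> E" for e using ecard[OF that] by (metis card.infinite zero_neq_numeral)
  have LR: "{Inl a, Inr e} \<in> edges (IS G) \<longleftrightarrow> e \<in> E \<and> a \<in> e" for a e by (simp add: IS_LR E_def)
  have incQ: "Q (lab (Inl a)) (lab (Inr e))" if "e \<in> E" "a \<in> e" "p (Inl a) \<noteq> p (Inr e)" for a e
    using cross[of "Inl a" "Inr e"] that eV nodes LR by auto
  have Qinc: "a \<in> e" if "e \<in> E" "a \<in> V" "p (Inl a) \<noteq> p (Inr e)" "Q (lab (Inl a)) (lab (Inr e))" for a e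
    using cross[of "Inl a" "Inr e"] that nodes LR by auto
  define I where "I = {i. i < m \<and> (\<forall>u\<in>V. p (Inl u) \<noteq> i)}"
  define ch where "ch i = (SOME e. e \<in> E \<and> p (Inr e) = i)" for i
  have ch: "ch i \<in> E \<and> p (Inr (ch i)) = i" if "i \<in> I" for i
  proof -
    from that have "i < m" by (simp add: I_def)
    then obtain z where z: "z \<in> verts (IS G)" "p z = i" using psurj by blast
    then have "z \<notin> Inl ` V" using that by (auto simp: I_def)
    then obtain e where "e \<in> E" "z = Inr e" using z nodes by auto
    then have "\<exists>e. e \<in> E \<and> p (Inr e) = i" using z by blast
    then show ?thesis unfolding ch_def by (rule someI_ex)
  qed
  have cardI: "card I \<le> k"
  proof -
    have "inj_on (\<lambda>i. lab (Inr (ch i))) I"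
    proof (rule inj_onI)
      fix i j assume i: "i \<in> I" and j: "j \<in> I" and eq: "lab (Inr (ch i)) = lab (Inr (ch j))"
      have sub: "ch i \<subseteq> ch j"
      proof
        fix a assume a: "a \<in> ch i"
        have aV: "a \<in> V" using eV ch[OF i] a by blast
        have "p (Inl a) \<noteq> i" "p (Inl a) \<noteq> j" using aV i j by (auto simp: I_def)
        then have "Q (lab (Inl a)) (lab (Inr (ch i)))" using incQ ch[OF i] a by auto
        then show "a \<in> ch j" using Qinc[of "ch j" a] ch[OF j] aV eq \<open>p (Inl a) \<noteq> j\<close> by auto
      qed
      have Ei: "ch i \<in> E" and Ej: "ch j \<in> E" using ch[OF i] ch[OF j] by auto
      have "card (ch i) = card (ch j)" using ecard[OF Ei] ecard[OF Ej] by simp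
      then have "ch i = ch j" by (rule card_subset_eq[OF efin[OF Ej] sub])
      then show "i = j" using ch[OF i] ch[OF j] by metis
    qed
    moreover have "(\<lambda>i. lab (Inr (ch i))) ` I \<subseteq> {1..k}" using labk ch nodes by auto
    ultimately show ?thesis using card_inj_on_le[of _ I "{1..k}"] by fastforce
  qed
  define Ec where "Ec c = {e \<in> E. lab (Inr e) = c}" for c
  define e1 where "e1 c = (SOME e. e \<in> Ec c)" for c
  define e2 where "e2 c = (if \<exists>e\<in>Ec c. p (Inr e) \<noteq> p (Inr (e1 c))
                      then SOME e. e \<in> Ec c \<and> p (Inr e) \<noteq> p (Inr (e1 c)) else e1 c)" for c
  define Sc where "Sc c = (if Ec c = {} then {} else e1 c \<union> e2 c)" for c
  define S where "S = (\<Union>c\<in>{1..k}. Sc c)"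
  have e12: "e1 c \<in> Ec c \<and> e2 c \<in> Ec c" if "Ec c \<noteq> {}" for c
  proof -
    have 1: "e1 c \<in> Ec c" using that unfolding e1_def by (simp add: some_in_eq)
    show ?thesis
    proof (cases "\<exists>e\<in>Ec c. p (Inr e) \<noteq> p (Inr (e1 c))")
      case True
      then have "e2 c \<in> Ec c \<and> p (Inr (e2 c)) \<noteq> p (Inr (e1 c))"
        using someI_ex[of "\<lambda>e. e \<in> Ec c \<and> p (Inr e) \<noteq> p (Inr (e1 c))"] unfolding e2_def by auto
      then show ?thesis using 1 by blast
    next
      case False
      have "e2 c = e1 c" unfolding e2_def using False by (rule if_not_P)
      then show ?thesis using 1 by simp
    qed
  qed
  have e2diff: "p (Inr (e2 c)) \<noteq> p (Inr (e1 c))" if "e \<in> Ec c" "p (Inr e) \<noteq> p (Inr (e1 c))" for c e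
  proof -
    have "\<exists>e\<in>Ec c. p (Inr e) \<noteq> p (Inr (e1 c))" using that by blast
    then have "e2 c \<in> Ec c \<and> p (Inr (e2 c)) \<noteq> p (Inr (e1 c))"
      using someI_ex[of "\<lambda>e. e \<in> Ec c \<and> p (Inr e) \<noteq> p (Inr (e1 c))"] unfolding e2_def by auto
    then show ?thesis by blast
  qed
  have SV: "S \<subseteq> V"
  proof
    fix u assume "u \<in> S"
    then obtain c where c: "u \<in> Sc c" unfolding S_def by blast
    then have ne: "Ec c \<noteq> {}" and u: "u \<in> e1 c \<union> e2 c" unfolding Sc_def by (auto split: if_splits)
    have "e1 c \<in> E" "e2 c \<in> E" using e12[OF ne] unfolding Ec_def by auto
    then show "u \<in> V" using u eV by blast
  qed
  have cardSc: "card (Sc c) \<le> 4" for c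
  proof (cases "Ec c = {}")
    case False
    have "card (e1 c \<union> e2 c) \<le> card (e1 c) + card (e2 c)" by (rule card_Un_le)
    also have "\<dots> = 4" using e12[OF False] ecard unfolding Ec_def by auto
    finally show ?thesis using False by (simp add: Sc_def)
  qed (simp add: Sc_def)
  have cardS: "card S \<le> 4 * k"
  proof -
    have "card S \<le> (\<Sum>c\<in>{1..k}. card (Sc c))" unfolding S_def by (rule card_UN_le) simp
    also have "\<dots> \<le> (\<Sum>c\<in>{1..k}. 4)" by (rule sum_mono) (rule cardSc)
    finally show ?thesis by simp
  qed
  have key: "u \<in> S" if e: "e \<in> E" and u: "u \<in> e" and ne: "p (Inl u) \<noteq> p (Inr e)" for e u
  proof -
    define c where "c = lab (Inr e)"
    have ck: "c \<in> {1..k}" using labk nodes e by (auto simp: c_def)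
    have eEc: "e \<in> Ec c" using e by (simp add: Ec_def c_def)
    then have ne': "Ec c \<noteq> {}" by blast
    have uV: "u \<in> V" using eV e u by blast
    have Qu: "Q (lab (Inl u)) c" using incQ[OF e u ne] by (simp add: c_def)
    have "u \<in> e1 c \<union> e2 c"
    proof (cases "p (Inl u) = p (Inr (e1 c))")
      case False
      have "e1 c \<in> E" "lab (Inr (e1 c)) = c" using e12[OF ne'] by (auto simp: Ec_def)
      then show ?thesis using Qinc[of "e1 c" u] uV False Qu by auto
    next
      case True
      then have "p (Inr e) \<noteq> p (Inr (e1 c))" using ne by simp
      then have "p (Inr (e2 c)) \<noteq> p (Inl u)" using e2diff[OF eEc] True by simp
      moreover have "e2 c \<in> E" "lab (Inr (e2 c)) = c" using e12[OF ne'] by (auto simp: Ec_def)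
      ultimately show ?thesis using Qinc[of "e2 c" u] uV Qu by auto
    qed
    then show ?thesis using ck ne' unfolding S_def Sc_def by auto
  qed
  define G' where "G' = del_verts G S"
  have vG': "verts G' = V - S" by (simp add: G'_def del_verts_def verts_def V_def)
  have adjp: "p (Inl x) = p (Inl y)" if "adj G' x y" for x y
  proof -
    have e: "{x, y} \<in> E" "{x, y} \<inter> S = {}"
      using that by (auto simp: adj_def G'_def del_verts_def edges_def E_def)
    show ?thesis
    proof (rule ccontr)
      assume "p (Inl x) \<noteq> p (Inl y)"
      then have "p (Inl x) \<noteq> p (Inr {x, y}) \<or> p (Inl y) \<noteq> p (Inr {x, y})" by metis
      then have "x \<in> S \<or> y \<in> S" using key[OF e(1)] by blast
      then show False using e(2) by blast
    qed
  qed
  have rtp: "p (Inl x) = p (Inl y)" if "(adj G')\<^sup>*\<^sup>* x y" for x y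
    using that by (induction rule: rtranclp_induct) (auto dest: adjp)
  define J1 where "J1 = {i. i < m \<and> (\<exists>u\<in>V - S. p (Inl u) = i)}"
  define J2 where "J2 = (\<lambda>u. p (Inl u)) ` S"
  have cover: "{..<m} \<subseteq> I \<union> J1 \<union> J2" unfolding I_def J1_def J2_def by auto
  have cardJ2: "card J2 \<le> 4 * k" unfolding J2_def using card_image_le cardS
    by (metis SV eV finite_subset fg finite_graph_def V_def order_trans)
  have finV: "finite V" using fg by (simp add: finite_graph_def V_def)
  define h where "h X = p (Inl (SOME u. u \<in> X))" for X
  have J1sub: "J1 \<subseteq> h ` components G'"
  proof
    fix i assume "i \<in> J1"
    then obtain u where u: "u \<in> V - S" "p (Inl u) = i" by (auto simp: J1_def)
    define X where "X = {y \<in> verts G'. (adj G')\<^sup>*\<^sup>* u y}"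
    have X: "X \<in> components G'" using u vG' unfolding X_def components_def by blast
    have "u \<in> X" using u vG' by (simp add: X_def)
    then have "(SOME y. y \<in> X) \<in> X" by (rule someI)
    then have "h X = i" using rtp u unfolding h_def X_def by auto
    then show "i \<in> h ` components G'" using X by blast
  qed
  have fincomp: "finite (components G')"
  proof -
    have "components G' = (\<lambda>x. {y \<in> verts G'. (adj G')\<^sup>*\<^sup>* x y}) ` verts G'"
      unfolding components_def by auto
    then show ?thesis using finV vG' by simp
  qed
  have "card J1 \<le> card (components G')"
    using card_mono[OF finite_imageI[OF fincomp] J1sub] card_image_le[OF fincomp, of h] by linarith
  also have "\<dots> \<le> Sep G (4 * k)"
    using Sep_ge[OF fg, of S "4 * k"] SV cardS by (simp add: num_components_def G'_def V_def)
  finally have cardJ1: "card J1 \<le> Sep G (4 * k)" .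
  have "m = card {..<m}" by simp
  also have "\<dots> \<le> card (I \<union> J1 \<union> J2)"
    using cover by (intro card_mono) (auto simp: I_def J1_def J2_def intro: finite_imageI
        finite_subset[OF SV finV])
  also have "\<dots> \<le> card I + card J1 + card J2"
    by (meson add_le_mono card_Un_le le_refl order_trans)
  finally show ?thesis using cardI cardJ1 cardJ2 by linarith
qed




lemma Sep_attained:
  assumes "finite_graph G"
  obtains S where "S \<subseteq> verts G" "card S \<le> k" "Sep G k = num_components (del_verts G S)"
proof -
  let ?A = "{num_components (del_verts G S) | S. S \<subseteq> verts G \<and> card S \<le> k}"
  have "?A \<subseteq> (\<lambda>S. num_components (del_verts G S)) ` Pow (verts G)" by auto
  then have "finite ?A" using assms(1) unfolding finite_graph_def by (meson finite_Pow_iff finite_imageI finite_subset)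
  moreover have "?A \<noteq> {}" by force
  ultimately have "Max ?A \<in> ?A" by (rule Max_in)
  then show ?thesis using that unfolding Sep_def by auto
qed

lemma lower_bound:
  fixes G :: "'v graph"
  assumes fg: "finite_graph G"
  shows "Sep G k \<le> Cut (IS G) (2 * k + 2)"
proof -
  obtain S where SV: "S \<subseteq> verts G" and cS: "card S \<le> k"
    and sep: "Sep G k = num_components (del_verts G S)"
    using Sep_attained[OF fg] by blast
  define V where "V = verts G"
  define E where "E = edges G"
  define G' where "G' = del_verts G S"
  define comps where "comps = components G'"
  define c where "c = card comps"
  have finV: "finite V" using fg by (simp add: finite_graph_def V_def)
  have finS: "finite S" using SV finV finite_subset V_def by blast
  have vG': "verts G' = V - S" by (simp add: G'_def del_verts_def verts_def V_def)
  have eG': "edges G' = {e \<in> E. e \<inter> S = {}}" by (simp add: G'_def del_verts_def edges_def E_def)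
  define comp where "comp u = {y \<in> verts G'. (adj G')\<^sup>*\<^sup>* u y}" for u
  have comp_in: "comp u \<in> comps" if "u \<in> V - S" for u
    using that vG' unfolding comps_def components_def comp_def by blast
  have comps_eq: "comps = comp ` (V - S)"
    unfolding comps_def components_def comp_def vG' by auto
  have fincomps: "finite comps" using comps_eq finV by simp
  have adj_sym: "adj G' x y \<Longrightarrow> adj G' y x" for x y by (simp add: adj_def insert_commute)
  have rt_sym: "(adj G')\<^sup>*\<^sup>* x y \<Longrightarrow> (adj G')\<^sup>*\<^sup>* y x" for x y
    by (induction rule: rtranclp_induct) (auto intro: converse_rtranclp_into_rtranclp adj_sym)
  have comp_adj: "comp x = comp y" if "adj G' x y" for x y
  proof -
    have "(adj G')\<^sup>*\<^sup>* x y" "(adj G')\<^sup>*\<^sup>* y x" using that adj_sym by auto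
    then show ?thesis unfolding comp_def by (auto intro: rtranclp_trans)
  qed
  show ?thesis
  proof (cases "c = 0")
    case True
    then show ?thesis using sep by (simp add: num_components_def G'_def comps_def c_def)
  next
    case False
    then have c0: "0 < c" by simp
    obtain g where g: "bij_betw g {..<c} comps"
      using ex_bij_betw_nat_finite[OF fincomps] unfolding c_def atLeast0LessThan by blast
    define gi where "gi = inv_into {..<c} g"
    have gi: "gi X < c" "g (gi X) = X" if "X \<in> comps" for X
      using that g unfolding gi_def
      by (auto simp: bij_betw_def inv_into_into f_inv_into_f)
    have gig: "gi (g i) = i" if "i < c" for i
      using that g unfolding gi_def by (auto simp: bij_betw_def inv_into_f_f)
    obtain idx where idx: "bij_betw idx S {0..<card S}"
      using ex_bij_betw_finite_nat[OF finS] by blast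
    have idxk: "idx s < k" if "s \<in> S" for s
    proof -
      have "idx s \<in> {0..<card S}" using bij_betwE[OF idx] that by blast
      then show ?thesis using cS by auto
    qed
    have idxinj: "s = s'" if "s \<in> S" "s' \<in> S" "idx s = idx s'" for s s'
      using idx that by (auto simp: bij_betw_def inj_on_def)
    define p where "p z = (case z of Inl u \<Rightarrow> (if u \<in> S then 0 else gi (comp u))
         | Inr e \<Rightarrow> (if e \<subseteq> S then 0 else gi (comp (SOME u. u \<in> e \<and> u \<notin> S))))" for z
    define lab where "lab z = (case z of Inl u \<Rightarrow> (if u \<in> S then 3 + k + idx u else 1)
         | Inr e \<Rightarrow> (if e \<subseteq> S \<or> e \<inter> S = {} then 2 else 3 + idx (SOME s. s \<in> e \<inter> S)))" for z
    define R where "R = {(1, 1)} \<union> {(3 + k + i, 1) | i. i < k} \<union> {(3 + i, 3 + k + i) | i. i < k}"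
    have eV: "e \<subseteq> V" if "e \<in> E" for e using fg that unfolding finite_graph_def V_def E_def by blast
    have pe: "p (Inr e) = p (Inl u)" if e: "e \<in> E" and u: "u \<in> e" "u \<notin> S" for e u
    proof -
      have nS: "\<not> e \<subseteq> S" using u by blast
      define w where "w = (SOME u. u \<in> e \<and> u \<notin> S)"
      have w: "w \<in> e" "w \<notin> S" using someI[of "\<lambda>u. u \<in> e \<and> u \<notin> S" u] u unfolding w_def by auto
      have "comp w = comp u"
      proof (cases "w = u")
        case False
        obtain a b where ab: "e = {a, b}" "a \<noteq> b" using edge_two[OF fg, of e] e E_def by metis
        then have "e = {w, u}" using w u False by auto
        then have "adj G' w u" using e w u eG' by (auto simp: adj_def)
        then show ?thesis by (rule comp_adj)
      qed simp
      then show ?thesis using nS u unfolding p_def w_def by simp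
    qed
    have pS: "p (Inr e) = 0" if "e \<subseteq> S" for e using that by (simp add: p_def)
    have nodes: "verts (IS G) = Inl ` V \<union> Inr ` E" by (simp add: IS_verts V_def E_def)
    have labR: "2 \<le> lab (Inr e) \<and> lab (Inr e) < 3 + k" if "e \<in> E" for e
    proof (cases "e \<subseteq> S \<or> e \<inter> S = {}")
      case False
      then have "\<exists>s. s \<in> e \<inter> S" by blast
      then have "(SOME s. s \<in> e \<inter> S) \<in> e \<inter> S" by (rule someI_ex)
      then have "(SOME s. s \<in> e \<inter> S) \<in> S" by blast
      then show ?thesis using False idxk by (simp add: lab_def)
    qed (simp add: lab_def)
    have labL: "(a \<notin> S \<and> lab (Inl a) = 1) \<or> (a \<in> S \<and> lab (Inl a) = 3 + k + idx a)" for a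
      by (simp add: lab_def)
    have Rmem: "(x, y) \<in> R \<longleftrightarrow> (x = 1 \<and> y = 1) \<or> (\<exists>i<k. x = 3 + k + i \<and> y = 1) \<or> (\<exists>i<k. x = 3 + i \<and> y = 3 + k + i)" for x y
      unfolding R_def by auto
    define Q where "Q a b \<longleftrightarrow> (a, b) \<in> R \<or> (b, a) \<in> R" for a b
    have LL: "{Inl a, Inl b} \<in> edges (IS G) \<longleftrightarrow> Q (lab (Inl a)) (lab (Inl b))"
      if "a \<in> V" "b \<in> V" "p (Inl a) \<noteq> p (Inl b)" for a b
    proof -
      have ab: "a \<noteq> b" using that by auto
      have "\<not> (a \<in> S \<and> b \<in> S)" using that by (auto simp: p_def)
      then have "Q (lab (Inl a)) (lab (Inl b))"
        using labL[of a] labL[of b] idxk unfolding Q_def Rmem by auto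
      then show ?thesis using ab that IS_LL[of a b G] V_def by simp
    qed
    have LR: "{Inl a, Inr e} \<in> edges (IS G) \<longleftrightarrow> Q (lab (Inl a)) (lab (Inr e))"
      if a: "a \<in> V" and e: "e \<in> E" and ne: "p (Inl a) \<noteq> p (Inr e)" for a e
    proof
      assume "{Inl a, Inr e} \<in> edges (IS G)"
      then have ae: "a \<in> e" using IS_LR E_def by metis
      have aS: "a \<in> S" using pe[OF e ae] ne by auto
      have nS: "\<not> e \<subseteq> S" using pS ne aS by (auto simp: p_def)
      obtain a' b where ab: "e = {a', b}" "a' \<noteq> b" using edge_two[OF fg, of e] e E_def by metis
      then obtain b where eb: "e = {a, b}" "b \<notin> S" using ae aS nS by auto
      have "e \<inter> S = {a}" using eb aS by auto
      then have "(SOME s. s \<in> e \<inter> S) = a" by simp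
      then have "lab (Inr e) = 3 + idx a" using nS aS eb by (simp add: lab_def)
      moreover have "lab (Inl a) = 3 + k + idx a" using aS by (simp add: lab_def)
      ultimately show "Q (lab (Inl a)) (lab (Inr e))" unfolding Q_def Rmem using idxk[OF aS] by auto
    next
      assume q: "Q (lab (Inl a)) (lab (Inr e))"
      have lr: "2 \<le> lab (Inr e)" "lab (Inr e) < 3 + k" using labR[OF e] by auto
      obtain i where i: "i < k" "lab (Inr e) = 3 + i" "lab (Inl a) = 3 + k + i"
        using q lr unfolding Q_def Rmem by auto
      have aS: "a \<in> S" and ia: "idx a = i" using labL[of a] i by auto
      have mixed: "\<not> (e \<subseteq> S \<or> e \<inter> S = {})" using i by (auto simp: lab_def)
      define s where "s = (SOME s. s \<in> e \<inter> S)"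
      have s: "s \<in> e" "s \<in> S" using mixed someI_ex[of "\<lambda>s. s \<in> e \<inter> S"] unfolding s_def by auto
      have "lab (Inr e) = 3 + idx s" using mixed by (simp add: lab_def s_def)
      then have "idx s = idx a" using i ia by simp
      then have "a = s" using idxinj s aS by metis
      then show "{Inl a, Inr e} \<in> edges (IS G)" using s e IS_LR E_def by metis
    qed
    have RR: "\<not> Q (lab (Inr e)) (lab (Inr e'))" if "e \<in> E" "e' \<in> E" for e e'
      using labR[OF that(1)] labR[OF that(2)] unfolding Q_def Rmem by auto
    have dec: "cutdec (IS G) (2 * k + 2) R c p lab"
      unfolding cutdec_def
    proof (intro conjI ballI allI impI)
      show "R \<subseteq> {1..2 * k + 2} \<times> {1..2 * k + 2}" unfolding R_def by auto
    next
      fix z assume z: "z \<in> verts (IS G)"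
      show "p z < c"
      proof (cases z)
        case (Inl u)
        then show ?thesis using z nodes c0 comp_in gi by (auto simp: p_def)
      next
        case (Inr e)
        then have e: "e \<in> E" using z nodes by auto
        show ?thesis
        proof (cases "e \<subseteq> S")
          case True then show ?thesis using Inr c0 by (simp add: p_def)
        next
          case False
          then obtain u where u: "u \<in> e" "u \<notin> S" by blast
          then have "u \<in> V - S" using eV[OF e] by blast
          then have "gi (comp u) < c" using comp_in gi by blast
          moreover have "p (Inr e) = gi (comp u)" using pe[OF e u] u by (simp add: p_def)
          ultimately show ?thesis using Inr by simp
        qed
      qed
      show "lab z \<in> {1..2 * k + 2}"
      proof (cases z)
        case (Inl u)
        then show ?thesis using labL[of u] idxk[of u] by auto
      next
        case (Inr e)
        then show ?thesis using labR[of e] z nodes by auto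
      qed
    next
      fix i assume i: "i < c"
      then have "g i \<in> comps" using g by (auto simp: bij_betw_def)
      then obtain x where x: "x \<in> V - S" "g i = comp x" using comps_eq by auto
      then have "p (Inl x) = i" using gig[OF i] by (simp add: p_def)
      then show "\<exists>z\<in>verts (IS G). p z = i" using x nodes by blast
    next
      fix z w assume z: "z \<in> verts (IS G)" and w: "w \<in> verts (IS G)" and ne: "p z \<noteq> p w"
      have "{z, w} \<in> edges (IS G) \<longleftrightarrow> Q (lab z) (lab w)"
      proof (cases z)
        case (Inl a)
        then have a: "a \<in> V" using z nodes by auto
        show ?thesis
        proof (cases w)
          case (Inl b)
          then show ?thesis using LL[OF a, of b] w nodes ne \<open>z = Inl a\<close> by auto
        next
          case (Inr e)
          then show ?thesis using LR[OF a, of e] w nodes ne \<open>z = Inl a\<close> by auto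
        qed
      next
        case (Inr e)
        then have e: "e \<in> E" using z nodes by auto
        show ?thesis
        proof (cases w)
          case (Inl b)
          have "Q (lab (Inr e)) (lab (Inl b)) = Q (lab (Inl b)) (lab (Inr e))" by (auto simp: Q_def)
          then show ?thesis using LR[of b e] e w nodes ne \<open>z = Inr e\<close> Inl
            by (auto simp: insert_commute)
        next
          case (Inr e')
          then show ?thesis using RR[OF e, of e'] w nodes \<open>z = Inr e\<close> IS_RR[of e e' G] by auto
        qed
      qed
      then show "{z, w} \<in> edges (IS G) \<longleftrightarrow> (lab z, lab w) \<in> R \<or> (lab w, lab z) \<in> R"
        by (simp add: Q_def)
    qed
    have "c \<le> Cut (IS G) (2 * k + 2)" by (rule Cut_ge[OF IS_finite_graph[OF fg] dec])
    then show ?thesis using sep by (simp add: num_components_def G'_def comps_def c_def)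
  qed
qed




theorem proposition6p3:
  fixes C :: "'v graph set"
  assumes "\<forall>G\<in>C. finite_graph G"
  shows "(MSO2_orderable C \<longleftrightarrow> MSO1_orderable (IS ` C)) \<and>
         (SEP C \<longleftrightarrow> CUT (IS ` C))"
proof
  show "MSO2_orderable C \<longleftrightarrow> MSO1_orderable (IS ` C)" by (rule partA[OF assms])
  show "SEP C \<longleftrightarrow> CUT (IS ` C)"
  proof
    assume "SEP C"
    then obtain f :: "nat \<Rightarrow> nat" where f: "\<forall>G\<in>C. \<forall>k. Sep G k \<le> f k" unfolding SEP_def by blast
    have "\<forall>G\<in>IS ` C. \<forall>k. Cut G k \<le> 5 * k + f (4 * k)"
    proof (intro ballI allI)
      fix G' k assume "G' \<in> IS ` C"
      then obtain G where G: "G \<in> C" "G' = IS G" by blast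
      have fg: "finite_graph G" using assms G by blast
      have "Cut (IS G) k \<le> 5 * k + f (4 * k)"
      proof (rule Cut_le[OF IS_finite_graph[OF fg]])
        fix R m p lab assume "cutdec (IS G) k R m p lab"
        then have "m \<le> 5 * k + Sep G (4 * k)" by (rule upper_bound[OF fg])
        then show "m \<le> 5 * k + f (4 * k)" using f G by (meson add_le_mono le_refl order_trans)
      qed
      then show "Cut G' k \<le> 5 * k + f (4 * k)" using G by simp
    qed
    then show "CUT (IS ` C)" unfolding CUT_def by (intro exI[of _ "\<lambda>k. 5 * k + f (4 * k)"]) simp
  next
    assume "CUT (IS ` C)"
    then obtain f :: "nat \<Rightarrow> nat" where f: "\<forall>G\<in>IS ` C. \<forall>k. Cut G k \<le> f k" unfolding CUT_def by blast
    have "\<forall>G\<in>C. \<forall>k. Sep G k \<le> f (2 * k + 2)"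
    proof (intro ballI allI)
      fix G k assume G: "G \<in> C"
      have "Sep G k \<le> Cut (IS G) (2 * k + 2)" using lower_bound assms G by blast
      also have "\<dots> \<le> f (2 * k + 2)" using f G by blast
      finally show "Sep G k \<le> f (2 * k + 2)" .
    qed
    then show "SEP C" unfolding SEP_def by (intro exI[of _ "\<lambda>k. f (2 * k + 2)"]) simp
  qed
qed



end
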